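(* Let $\mathcal N$ be a phylogenetic network on $X$ with vertex set $V$ and $|X|\ge 2$, fix an ordering $v_1,\dots,v_t$ of $V\setminus X$, and let $\Sigma=\Sigma_{\mathcal N}=\{(x,\sigma(x)):x\in X\}$ be the corresponding ancestral profile. Let $\{a,b\}\subseteq X$. (i) Suppose $\{a,b\}$ is a cherry of $\mathcal N$. Choose any index $j$ with $\sigma_j(a)=\sigma_j(b)=1$ and $\sigma_j(x)=0$ for all $x\in X\setminus\{a,b\}$, and let $\Sigma'=\{(x,\sigma'(x)):x\in X\setminus\{b\}\}$, where $\sigma'(x)$ is obtained from $\sigma(x)$ by deleting the $j$-th entry. Then $\Sigma'$ is the ancestral profile of the network $\mathcal N'$ obtained from $\mathcal N$ by reducing $b$, with respect to some ordering of the non-leaf vertices of $\mathcal N'$. (ii) Suppose $\{a,b\}$ is a reticulated cherry of $\mathcal N$ with reticulation leaf $b$. Choose any index $j$ with $\sigma_j(a)=\sigma_j(b)=1$ and $\sigma_j(x)=0$ for all $x\in X\setminus\{a,b\}$, and any index $k$ with $\sigma_k(b)=1$ and $\sigma_k(x)=0$ for all $x\in X\setminus\{b\}$. Let $\Sigma'=\{(x,\sigma'(x)):x\in X\}$, where for $x\neq b$, $\sigma'(x)$ is obtained from $\sigma(x)$ by deleting the entries $j$ and $k$, and $\sigma'(b)$ is the tuple with entries $\sigma_i(b)-\sigma_i(a)$ for $i\notin\{j,k\}$ (in the original order). Then $\Sigma'$ is the ancestral profile of the network $\mathcal N'$ obtained from $\mathcal N$ by cutting $\{a,b\}$, with respect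 to some ordering of the non-leaf vertices of $\mathcal N'$.
   Context: A phylogenetic network on $X$ ($X$ non-empty finite) is a rooted acyclic directed graph with no parallel arcs such that: the unique root has in-degree $0$ and out-degree $2$; every vertex of out-degree $0$ has in-degree $1$, and the set of such vertices (leaves) is $X$; every other vertex has either in-degree $1$ and out-degree $2$ (tree vertex) or in-degree $2$ and out-degree $1$ (reticulation). If $|X|=1$ a single vertex is also allowed. For an ordering $v_1,\dots,v_t$ of the non-leaf vertices and $x\in X$, the ancestral tuple $\sigma(x)=(\sigma_1(x),\dots,\sigma_t(x))$ has $\sigma_i(x)$ equal to the number of directed paths from $v_i$ to $x$; the ancestral profile is $\{(x,\sigma(x)):x\in X\}$. For a $2$-element subset $\{a,b\}\subseteq X$ with parents $p_a,p_b$: $\{a,b\}$ is a cherry if $p_a=p_b$; it is a reticulated cherry with reticulation leaf $b$ if $p_b$ is a reticulation and $(p_a,p_b)$ is an arc. Reducing $b$ in a cherry means deleting $b$ and suppressing the resulting vertex of in-degree 1 and out-degree 1 (if the common parent is the root, delete $b$ and the root, leaving the single vertex $a$). Cutting a reticulated cherry $\{a,b\}$ means deleting the arc $(p_a,p_b)$ and suppressing the two resulting vertices of in-degree 1 and out-degree 1. *)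

theory Defs
  imports Main
begin

text \<open>A directed graph is given by a vertex set V and an arc set E (a set of pairs, so
  there are no parallel arcs).\<close>

definition indeg :: "('v \<times> 'v) set \<Rightarrow> 'v \<Rightarrow> nat" where
  "indeg E v = card {u. (u, v) \<in> E}"

definition outdeg :: "('v \<times> 'v) set \<Rightarrow> 'v \<Rightarrow> nat" where
  "outdeg E v = card {w. (v, w) \<in> E}"

definition phylo_network :: "'v set \<Rightarrow> ('v \<times> 'v) set \<Rightarrow> 'v set \<Rightarrow> bool" where
  "phylo_network V E X \<longleftrightarrow>
     finite V \<and> E \<subseteq> V \<times> V \<and> X \<subseteq> V \<and> X \<noteq> {} \<and> acyclic E \<and>
     ((card X = 1 \<and> V = X \<and> E = {}) \<or>
      ((\<exists>!r. r \<in> V \<and> indeg E r = 0) \<and>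
       (\<forall>r\<in>V. indeg E r = 0 \<longrightarrow> outdeg E r = 2) \<and>
       (\<forall>v\<in>V. outdeg E v = 0 \<longleftrightarrow> v \<in> X) \<and>
       (\<forall>v\<in>X. indeg E v = 1) \<and>
       (\<forall>v\<in>V. v \<notin> X \<and> indeg E v \<noteq> 0 \<longrightarrow>
           (indeg E v = 1 \<and> outdeg E v = 2) \<or> (indeg E v = 2 \<and> outdeg E v = 1))))"

definition npaths :: "('v \<times> 'v) set \<Rightarrow> 'v \<Rightarrow> 'v \<Rightarrow> nat" where
  "npaths E u x = card {p. p \<noteq> [] \<and> hd p = u \<and> last p = x \<and>
                          successively (\<lambda>y z. (y, z) \<in> E) p}"

definition is_ordering :: "'v set \<Rightarrow> 'v set \<Rightarrow> 'v list \<Rightarrow> bool" where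
  "is_ordering V X vs \<longleftrightarrow> distinct vs \<and> set vs = V - X"

text \<open>Ancestral tuple (0-based indices) and ancestral profile.\<close>
definition anc_tuple :: "('v \<times> 'v) set \<Rightarrow> 'v list \<Rightarrow> 'v \<Rightarrow> nat list" where
  "anc_tuple E vs x = map (\<lambda>v. npaths E v x) vs"

definition anc_profile :: "('v \<times> 'v) set \<Rightarrow> 'v set \<Rightarrow> 'v list \<Rightarrow> ('v \<times> nat list) set" where
  "anc_profile E X vs = {(x, anc_tuple E vs x) | x. x \<in> X}"

definition parent :: "('v \<times> 'v) set \<Rightarrow> 'v \<Rightarrow> 'v" where
  "parent E x = (THE p. (p, x) \<in> E)"

definition is_cherry :: "('v \<times> 'v) set \<Rightarrow> 'v \<Rightarrow> 'v \<Rightarrow> bool" where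
  "is_cherry E a b \<longleftrightarrow> parent E a = parent E b"

definition is_ret_cherry :: "('v \<times> 'v) set \<Rightarrow> 'v \<Rightarrow> 'v \<Rightarrow> bool" where
  "is_ret_cherry E a b \<longleftrightarrow> indeg E (parent E b) = 2 \<and> (parent E a, parent E b) \<in> E"

definition suppress :: "'v \<Rightarrow> 'v set \<times> ('v \<times> 'v) set \<Rightarrow> 'v set \<times> ('v \<times> 'v) set" where
  "suppress w G = (fst G - {w},
      {(u, z). (u, w) \<in> snd G \<and> (w, z) \<in> snd G} \<union> {e \<in> snd G. fst e \<noteq> w \<and> snd e \<noteq> w})"

definition reduce_cherry :: "'v set \<Rightarrow> ('v \<times> 'v) set \<Rightarrow> 'v \<Rightarrow> 'v \<Rightarrow> 'v set \<times> ('v \<times> 'v) set" where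
  "reduce_cherry V E a b =
     (let p = parent E b in
      if indeg E p = 0 then ({a}, {})
      else suppress p (V - {b}, E - {(p, b)}))"

definition cut_ret_cherry :: "'v set \<Rightarrow> ('v \<times> 'v) set \<Rightarrow> 'v \<Rightarrow> 'v \<Rightarrow> 'v set \<times> ('v \<times> 'v) set" where
  "cut_ret_cherry V E a b =
     (let pa = parent E a; pb = parent E b in
      suppress pb (suppress pa (V, E - {(pa, pb)})))"

end

theory Submission
  imports Defs
begin

lemma lc_filter: "concat (map (\<lambda>i. if P i then [f i] else []) xs) = map f (filter P xs)"
  by (induction xs) auto

definition pths :: "('v \<times> 'v) set \<Rightarrow> 'v \<Rightarrow> 'v \<Rightarrow> 'v list set" where
  "pths E u x = {p. p \<noteq> [] \<and> hd p = u \<and> last p = x \<and> successively (\<lambda>y z. (y, z) \<in> E) p}"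

lemma npaths_pths: "npaths E u x = card (pths E u x)"
  unfolding npaths_def pths_def by simp

lemma succ_trancl:
  "successively (\<lambda>y z. (y, z) \<in> E) (y # ys) \<Longrightarrow> z \<in> set ys \<Longrightarrow> (y, z) \<in> E\<^sup>+"
proof (induction ys arbitrary: y)
  case Nil then show ?case by simp
next
  case (Cons w ws)
  then have yw: "(y, w) \<in> E" and s: "successively (\<lambda>y z. (y, z) \<in> E) (w # ws)" by auto
  show ?case
  proof (cases "z = w")
    case True then show ?thesis using yw by auto
  next
    case False then have "z \<in> set ws" using Cons.prems by auto
    then have "(w, z) \<in> E\<^sup>+" using Cons.IH s by blast
    then show ?thesis using yw by (meson trancl_into_trancl2)
  qed
qed

lemma succ_distinct:
  "acyclic E \<Longrightarrow> successively (\<lambda>y z. (y, z) \<in> E) p \<Longrightarrow> distinct p"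
proof (induction p)
  case Nil then show ?case by simp
next
  case (Cons y ys)
  have "successively (\<lambda>y z. (y, z) \<in> E) ys" using Cons.prems(2)
    by (cases ys) auto
  moreover have "y \<notin> set ys"
    using succ_trancl[OF Cons.prems(2)] Cons.prems(1) by (auto simp: acyclic_def)
  ultimately show ?case using Cons by auto
qed

lemma succ_set:
  "successively (\<lambda>y z. (y, z) \<in> E) (y # ys) \<Longrightarrow> set ys \<subseteq> snd ` E"
proof (induction ys arbitrary: y)
  case Nil then show ?case by simp
next
  case (Cons w ws)
  then have "(y, w) \<in> E" "successively (\<lambda>y z. (y, z) \<in> E) (w # ws)" by auto
  then have "w \<in> snd ` E" "set ws \<subseteq> snd ` E" using Cons.IH by (force, blast)
  then show ?case by simp
qed

lemma finite_pths:
  assumes "finite E" "acyclic E"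
  shows "finite (pths E u x)"
proof -
  let ?A = "insert u (snd ` E)"
  have "pths E u x \<subseteq> {xs. set xs \<subseteq> ?A \<and> length xs \<le> card ?A}"
  proof
    fix p assume p: "p \<in> pths E u x"
    then obtain ys where pe: "p = u # ys" and s: "successively (\<lambda>y z. (y, z) \<in> E) p"
      unfolding pths_def by (cases p) auto
    have "set p \<subseteq> ?A" using succ_set[of E u ys] s pe by auto
    moreover have "distinct p" using succ_distinct[OF assms(2) s] .
    ultimately have "length p \<le> card ?A"
      using assms(1) by (metis card_mono distinct_card finite_imageI finite_insert)
    then show "p \<in> {xs. set xs \<subseteq> ?A \<and> length xs \<le> card ?A}" using \<open>set p \<subseteq> ?A\<close> by simp
  qed
  moreover have "finite {xs. set xs \<subseteq> ?A \<and> length xs \<le> card ?A}"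
    using assms(1) by (intro finite_lists_length_le) auto
  ultimately show ?thesis by (rule finite_subset)
qed

lemma pths_decomp:
  "pths E u x = (if u = x then {[u]} else {}) \<union> (\<Union>c\<in>{c. (u, c) \<in> E}. (\<lambda>p. u # p) ` pths E c x)"
proof (intro set_eqI iffI)
  fix p assume "p \<in> pths E u x"
  then obtain ys where pe: "p = u # ys" and s: "successively (\<lambda>y z. (y, z) \<in> E) p"
    and l: "last p = x"
    unfolding pths_def by (cases p) auto
  show "p \<in> (if u = x then {[u]} else {}) \<union> (\<Union>c\<in>{c. (u, c) \<in> E}. (\<lambda>p. u # p) ` pths E c x)"
  proof (cases ys)
    case Nil then show ?thesis using pe l by auto
  next
    case (Cons c zs)
    then have "(u, c) \<in> E" "ys \<in> pths E c x" using s l pe unfolding pths_def by auto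
    then show ?thesis using pe by auto
  qed
next
  fix p assume "p \<in> (if u = x then {[u]} else {}) \<union> (\<Union>c\<in>{c. (u, c) \<in> E}. (\<lambda>p. u # p) ` pths E c x)"
  then show "p \<in> pths E u x"
  proof
    assume "p \<in> (if u = x then {[u]} else {})" then show ?thesis
      by (auto simp: pths_def split: if_splits)
  next
    assume "p \<in> (\<Union>c\<in>{c. (u, c) \<in> E}. (\<lambda>p. u # p) ` pths E c x)"
    then obtain c ys where "(u, c) \<in> E" "ys \<in> pths E c x" "p = u # ys" by auto
    then show ?thesis unfolding pths_def by (cases ys) auto
  qed
qed

lemma finite_succs: "finite E \<Longrightarrow> finite {c. (u, c) \<in> E}"
  by (rule finite_subset[of _ "snd ` E"]) force+

lemma npaths_rec:
  assumes "finite E" "acyclic E"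
  shows "npaths E u x = (if u = x then 1 else 0) + (\<Sum>c\<in>{c. (u, c) \<in> E}. npaths E c x)"
proof -
  have fin: "\<And>c. finite (pths E c x)" using finite_pths[OF assms] .
  have disj: "(if u = x then {[u]} else {}) \<inter> (\<Union>c\<in>{c. (u, c) \<in> E}. (\<lambda>p. u # p) ` pths E c x) = {}"
    by (auto simp: pths_def)
  have c1: "card (\<Union>c\<in>{c. (u, c) \<in> E}. (\<lambda>p. u # p) ` pths E c x)
       = (\<Sum>c\<in>{c. (u, c) \<in> E}. card ((\<lambda>p. u # p) ` pths E c x))"
  proof (rule card_UN_disjoint)
    show "finite {c. (u, c) \<in> E}" using finite_succs[OF assms(1)] .
    show "\<forall>i\<in>{c. (u, c) \<in> E}. finite ((#) u ` pths E i x)" using fin by auto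
    show "\<forall>i\<in>{c. (u, c) \<in> E}. \<forall>j\<in>{c. (u, c) \<in> E}. i \<noteq> j \<longrightarrow> (#) u ` pths E i x \<inter> (#) u ` pths E j x = {}"
      by (auto simp: pths_def)
  qed
  have c2: "\<And>c. card ((\<lambda>p. u # p) ` pths E c x) = card (pths E c x)"
    by (rule card_image) (auto simp: inj_on_def)
  have "npaths E u x = card (if u = x then {[u]} else {}) + card (\<Union>c\<in>{c. (u, c) \<in> E}. (\<lambda>p. u # p) ` pths E c x)"
    unfolding npaths_pths
    apply (subst pths_decomp)
    apply (rule card_Un_disjoint)
    using fin finite_succs[OF assms(1)] disj by auto
  also have "\<dots> = (if u = x then 1 else 0) + (\<Sum>c\<in>{c. (u, c) \<in> E}. npaths E c x)"
    using c1 c2 by (simp add: npaths_pths)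
  finally show ?thesis .
qed

lemma npaths_unique:
  assumes "finite E" "acyclic E"
    and f: "\<And>v. f v = (if v = x then 1 else 0) + (\<Sum>c\<in>{c. (v, c) \<in> E}. f c)"
  shows "f v = npaths E v x"
proof -
  have "wf (E\<inverse>)" using finite_acyclic_wf_converse[OF assms(1,2)] .
  then show ?thesis
  proof (induction v rule: wf_induct_rule)
    case (less v)
    have "f v = (if v = x then 1 else 0) + (\<Sum>c\<in>{c. (v, c) \<in> E}. f c)" by (rule f)
    also have "\<dots> = (if v = x then 1 else 0) + (\<Sum>c\<in>{c. (v, c) \<in> E}. npaths E c x)"
      using less by (intro arg_cong2[where f="(+)"] sum.cong) auto
    also have "\<dots> = npaths E v x" by (rule npaths_rec[OF assms(1,2), symmetric])
    finally show ?case .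
  qed
qed

lemma npaths_sink:
  assumes "finite E" "acyclic E" "{c. (v, c) \<in> E} = {}"
  shows "npaths E v x = (if v = x then 1 else 0)"
  by (subst npaths_rec[OF assms(1,2)]) (simp add: assms(3))

lemma acyclic_sub_trancl: "acyclic G \<Longrightarrow> G' \<subseteq> G\<^sup>+ \<Longrightarrow> acyclic G'"
proof -
  assume a: "acyclic G" "G' \<subseteq> G\<^sup>+"
  have "G'\<^sup>+ \<subseteq> (G\<^sup>+)\<^sup>+" using a(2) by (metis subrelI trancl_mono)
  also have "\<dots> = G\<^sup>+" by (rule trancl_id[OF trans_trancl])
  finally show ?thesis using a(1) unfolding acyclic_def by blast
qed

lemma suppress_eq:
  assumes "snd H = G" "{y. (y, w) \<in> G} = {q}" "{z. (w, z) \<in> G} = {c}"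
  shows "snd (suppress w H) = {(q, c)} \<union> {e \<in> G. fst e \<noteq> w \<and> snd e \<noteq> w}"
  using assms unfolding suppress_def by auto

lemma suppress_fin_acyc:
  assumes "finite G" "acyclic G" "{y. (y, w) \<in> G} = {q}" "{z. (w, z) \<in> G} = {c}"
  shows "finite ({(q, c)} \<union> {e \<in> G. fst e \<noteq> w \<and> snd e \<noteq> w})"
    "acyclic ({(q, c)} \<union> {e \<in> G. fst e \<noteq> w \<and> snd e \<noteq> w})"
proof -
  show "finite ({(q, c)} \<union> {e \<in> G. fst e \<noteq> w \<and> snd e \<noteq> w})" using assms(1) by auto
  have "(q, w) \<in> G" "(w, c) \<in> G" using assms(3,4) by auto
  then have "(q, c) \<in> G\<^sup>+" by auto
  then have "{(q, c)} \<union> {e \<in> G. fst e \<noteq> w \<and> snd e \<noteq> w} \<subseteq> G\<^sup>+" by auto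
  then show "acyclic ({(q, c)} \<union> {e \<in> G. fst e \<noteq> w \<and> snd e \<noteq> w})"
    using acyclic_sub_trancl assms(2) by blast
qed

lemma npaths_suppress:
  assumes fin: "finite G" and acy: "acyclic G"
    and pr: "{y. (y, w) \<in> G} = {q}" and su: "{z. (w, z) \<in> G} = {c}" and nqc: "(q, c) \<notin> G"
    and xw: "x \<noteq> w" and vw: "v \<noteq> w"
  shows "npaths ({(q, c)} \<union> {e \<in> G. fst e \<noteq> w \<and> snd e \<noteq> w}) v x = npaths G v x"
proof -
  let ?G = "{(q, c)} \<union> {e \<in> G. fst e \<noteq> w \<and> snd e \<noteq> w}"
  note fa = suppress_fin_acyc[OF fin acy pr su]
  have qw: "(q, w) \<in> G" and wc: "(w, c) \<in> G" using pr su by auto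
  have qnw: "q \<noteq> w" using qw acy by (auto simp: acyclic_def)
  have cnw: "c \<noteq> w" using wc acy by (auto simp: acyclic_def)
  define f where "f v = (if v = w then 0 else npaths G v x)" for v
  have "f v = npaths ?G v x"
  proof (rule npaths_unique[OF fa])
    fix v
    show "f v = (if v = x then 1 else 0) + (\<Sum>c\<in>{c. (v, c) \<in> ?G}. f c)"
    proof (cases "v = w")
      case True
      then have "{c. (v, c) \<in> ?G} = {}" using qnw by auto
      then show ?thesis using True xw by (simp add: f_def)
    next
      case False
      have gw: "npaths G w x = npaths G c x"
        by (subst npaths_rec[OF fin acy]) (simp add: su xw[symmetric])
      have rec: "npaths G v x = (if v = x then 1 else 0) + (\<Sum>c\<in>{c. (v, c) \<in> G}. npaths G c x)"
        by (rule npaths_rec[OF fin acy])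
      show ?thesis
      proof (cases "v = q")
        case True
        let ?S0 = "{c. (q, c) \<in> G} - {w}"
        have fS: "finite ?S0" using finite_succs[OF fin] by auto
        have e1: "{c. (v, c) \<in> G} = insert w ?S0" using True qw by auto
        have e2: "{c. (v, c) \<in> ?G} = insert c ?S0" using True qnw cnw by auto
        have cS: "c \<notin> ?S0" using nqc by auto
        have s0: "(\<Sum>c\<in>?S0. f c) = (\<Sum>c\<in>?S0. npaths G c x)"
          by (rule sum.cong) (auto simp: f_def)
        have "f v = npaths G v x" using False by (simp add: f_def)
        also have "\<dots> = (if v = x then 1 else 0) + (npaths G w x + (\<Sum>c\<in>?S0. npaths G c x))"
          using rec unfolding e1 by (subst (asm) sum.insert[OF fS]) auto
        also have "\<dots> = (if v = x then 1 else 0) + (f c + (\<Sum>c\<in>?S0. f c))"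
          using gw s0 cnw by (simp add: f_def)
        also have "\<dots> = (if v = x then 1 else 0) + (\<Sum>c\<in>{c. (v, c) \<in> ?G}. f c)"
          unfolding e2 by (subst sum.insert[OF fS cS]) simp
        finally show ?thesis .
      next
        case vq: False
        have e: "{c. (v, c) \<in> ?G} = {c. (v, c) \<in> G}" using vq False pr by auto
        have "(\<Sum>c\<in>{c. (v, c) \<in> G}. f c) = (\<Sum>c\<in>{c. (v, c) \<in> G}. npaths G c x)"
          using vq pr by (intro sum.cong) (auto simp: f_def)
        then show ?thesis using rec e False by (simp add: f_def)
      qed
    qed
  qed
  then show ?thesis using vw by (simp add: f_def)
qed

lemma npaths_del:
  assumes fin: "finite G" and acy: "acyclic G" and st: "(s, t) \<in> G" and t0: "npaths G t x = 0"
  shows "npaths (G - {(s, t)}) v x = npaths G v x"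
proof -
  have fa: "finite (G - {(s, t)})" "acyclic (G - {(s, t)})"
    using fin acyclic_subset[OF acy] by auto
  have "npaths G v x = npaths (G - {(s, t)}) v x"
  proof (rule npaths_unique[OF fa])
    fix v
    have rec: "npaths G v x = (if v = x then 1 else 0) + (\<Sum>c\<in>{c. (v, c) \<in> G}. npaths G c x)"
      by (rule npaths_rec[OF fin acy])
    show "npaths G v x = (if v = x then 1 else 0) + (\<Sum>c\<in>{c. (v, c) \<in> G - {(s, t)}}. npaths G c x)"
    proof (cases "v = s")
      case True
      have e: "{c. (v, c) \<in> G} = insert t {c. (v, c) \<in> G - {(s, t)}}" using True st by auto
      have fs: "finite {c. (v, c) \<in> G - {(s, t)}}" using finite_succs[OF fa(1)] .
      have tn: "t \<notin> {c. (v, c) \<in> G - {(s, t)}}" using True by auto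
      show ?thesis using rec t0 unfolding e by (subst (asm) sum.insert[OF fs tn]) simp
    next
      case False
      then have "{c. (v, c) \<in> G - {(s, t)}} = {c. (v, c) \<in> G}" by auto
      then show ?thesis using rec by simp
    qed
  qed
  then show ?thesis by simp
qed

lemma net_facts:
  assumes net: "phylo_network V E X" and two: "card X \<ge> 2"
  shows "finite V" "finite E" "E \<subseteq> V \<times> V" "X \<subseteq> V" "acyclic E"
    "\<exists>!r. r \<in> V \<and> indeg E r = 0"
    "\<And>r. r \<in> V \<Longrightarrow> indeg E r = 0 \<Longrightarrow> outdeg E r = 2"
    "\<And>v. v \<in> V \<Longrightarrow> outdeg E v = 0 \<longleftrightarrow> v \<in> X"
    "\<And>v. v \<in> X \<Longrightarrow> indeg E v = 1"
    "\<And>v. v \<in> V \<Longrightarrow> v \<notin> X \<Longrightarrow> indeg E v \<noteq> 0 \<Longrightarrow>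
           (indeg E v = 1 \<and> outdeg E v = 2) \<or> (indeg E v = 2 \<and> outdeg E v = 1)"
proof -
  have nc: "\<not> (card X = 1 \<and> V = X \<and> E = {})" using two by auto
  note d = net[unfolded phylo_network_def]
  show "finite V" "E \<subseteq> V \<times> V" "X \<subseteq> V" "acyclic E" using d by auto
  then show "finite E" by (meson finite_SigmaI finite_subset)
  show "\<exists>!r. r \<in> V \<and> indeg E r = 0" using d nc by blast
  show "\<And>r. r \<in> V \<Longrightarrow> indeg E r = 0 \<Longrightarrow> outdeg E r = 2" using d nc by blast
  show "\<And>v. v \<in> V \<Longrightarrow> outdeg E v = 0 \<longleftrightarrow> v \<in> X" using d nc by blast
  show "\<And>v. v \<in> X \<Longrightarrow> indeg E v = 1" using d nc by blast
  show "\<And>v. v \<in> V \<Longrightarrow> v \<notin> X \<Longrightarrow> indeg E v \<noteq> 0 \<Longrightarrow>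
           (indeg E v = 1 \<and> outdeg E v = 2) \<or> (indeg E v = 2 \<and> outdeg E v = 1)"
    using d nc by blast
qed

lemma finite_preds: "finite E \<Longrightarrow> finite {u. (u, c) \<in> E}"
  by (rule finite_subset[of _ "fst ` E"]) force+

lemma leaf_succs:
  assumes net: "phylo_network V E X" and two: "card X \<ge> 2" and x: "x \<in> X"
  shows "{c. (x, c) \<in> E} = {}"
proof -
  note nf = net_facts[OF net two]
  have "outdeg E x = 0" using nf(4,8) x by auto
  then show ?thesis using finite_succs[OF nf(2)] unfolding outdeg_def by simp
qed

lemma leaf_parent:
  assumes net: "phylo_network V E X" and two: "card X \<ge> 2" and x: "x \<in> X"
  shows "{u. (u, x) \<in> E} = {parent E x}"
proof -
  note nf = net_facts[OF net two]
  have "card {u. (u, x) \<in> E} = 1" using nf(9) x unfolding indeg_def by auto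
  then obtain p where p: "{u. (u, x) \<in> E} = {p}" by (rule card_1_singletonE)
  then have "parent E x = p" unfolding parent_def by auto
  then show ?thesis using p by simp
qed

lemma outdeg_le2:
  assumes net: "phylo_network V E X" and two: "card X \<ge> 2" and v: "v \<in> V"
  shows "card {c. (v, c) \<in> E} \<le> 2"
proof -
  note nf = net_facts[OF net two]
  show ?thesis
  proof (cases "v \<in> X")
    case True then show ?thesis using nf(8)[OF v] unfolding outdeg_def by simp
  next
    case False
    then show ?thesis using nf(7)[OF v] nf(10)[OF v False] unfolding outdeg_def by force
  qed
qed

lemma reach_root:
  assumes net: "phylo_network V E X" and two: "card X \<ge> 2" and v: "v \<in> V"
  shows "\<exists>r\<in>V. indeg E r = 0 \<and> (r, v) \<in> E\<^sup>*"
proof -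
  note nf = net_facts[OF net two]
  have "wf E" using finite_acyclic_wf[OF nf(2,5)] .
  then show ?thesis using v
  proof (induction v rule: wf_induct_rule)
    case (less v)
    show ?case
    proof (cases "indeg E v = 0")
      case True then show ?thesis using less.prems by blast
    next
      case False
      then have "{u. (u, v) \<in> E} \<noteq> {}" unfolding indeg_def by (metis card.empty)
      then obtain u where u: "(u, v) \<in> E" by auto
      then have "u \<in> V" using nf(3) by auto
      then obtain r where "r \<in> V" "indeg E r = 0" "(r, u) \<in> E\<^sup>*" using less.IH u by blast
      then show ?thesis using u by (meson rtrancl.rtrancl_into_rtrancl)
    qed
  qed
qed

lemma sink_rtrancl: "{c. (x, c) \<in> E} = {} \<Longrightarrow> (x, u) \<in> E\<^sup>* \<Longrightarrow> u = x"
  by (erule converse_rtranclE) auto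

lemma reindex1:
  assumes "distinct vs" "j < length vs" "p \<in> set vs"
  shows "distinct (map (\<lambda>i. if vs!i = p then vs!j else vs!i) (filter (\<lambda>i. i \<noteq> j) [0..<length vs]))"
    "set (map (\<lambda>i. if vs!i = p then vs!j else vs!i) (filter (\<lambda>i. i \<noteq> j) [0..<length vs])) = set vs - {p}"
proof -
  obtain ip where ip: "ip < length vs" "vs ! ip = p" using assms(3) by (auto simp: in_set_conv_nth)
  show "distinct (map (\<lambda>i. if vs!i = p then vs!j else vs!i) (filter (\<lambda>i. i \<noteq> j) [0..<length vs]))"
    using assms(1,2) by (auto simp: distinct_map inj_on_def nth_eq_iff_index_eq split: if_splits)
  show "set (map (\<lambda>i. if vs!i = p then vs!j else vs!i) (filter (\<lambda>i. i \<noteq> j) [0..<length vs])) = set vs - {p}"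
  proof (intro set_eqI iffI)
    fix y assume "y \<in> set (map (\<lambda>i. if vs!i = p then vs!j else vs!i) (filter (\<lambda>i. i \<noteq> j) [0..<length vs]))"
    then show "y \<in> set vs - {p}"
      using assms(1,2) ip by (auto simp: nth_eq_iff_index_eq split: if_splits)
  next
    fix y assume y: "y \<in> set vs - {p}"
    then obtain i where i: "i < length vs" "vs ! i = y" by (auto simp: in_set_conv_nth)
    show "y \<in> set (map (\<lambda>i. if vs!i = p then vs!j else vs!i) (filter (\<lambda>i. i \<noteq> j) [0..<length vs]))"
    proof (cases "i = j")
      case False then show ?thesis using i y by (auto intro!: image_eqI[where x=i])
    next
      case True
      then have "ip \<noteq> j" using ip y i by auto
      then show ?thesis using i y ip True by (auto intro!: image_eqI[where x=ip])
    qed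
  qed
qed

lemma reindex2:
  assumes "distinct vs" "j < length vs" "k < length vs" "j \<noteq> k" "p1 \<in> set vs" "p2 \<in> set vs"
    "p1 \<noteq> p2" "vs ! j \<noteq> p2" "vs ! k \<noteq> p1"
  shows "distinct (map (\<lambda>i. if vs!i = p1 then vs!j else if vs!i = p2 then vs!k else vs!i)
            (filter (\<lambda>i. i \<noteq> j \<and> i \<noteq> k) [0..<length vs]))"
    "set (map (\<lambda>i. if vs!i = p1 then vs!j else if vs!i = p2 then vs!k else vs!i)
            (filter (\<lambda>i. i \<noteq> j \<and> i \<noteq> k) [0..<length vs])) = set vs - {p1, p2}"
proof -
  obtain i1 where i1: "i1 < length vs" "vs ! i1 = p1" using assms(5) by (auto simp: in_set_conv_nth)
  obtain i2 where i2: "i2 < length vs" "vs ! i2 = p2" using assms(6) by (auto simp: in_set_conv_nth)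
  show "distinct (map (\<lambda>i. if vs!i = p1 then vs!j else if vs!i = p2 then vs!k else vs!i)
            (filter (\<lambda>i. i \<noteq> j \<and> i \<noteq> k) [0..<length vs]))"
    using assms(1-4) by (auto simp: distinct_map inj_on_def nth_eq_iff_index_eq split: if_splits)
  show "set (map (\<lambda>i. if vs!i = p1 then vs!j else if vs!i = p2 then vs!k else vs!i)
            (filter (\<lambda>i. i \<noteq> j \<and> i \<noteq> k) [0..<length vs])) = set vs - {p1, p2}"
  proof (intro set_eqI iffI)
    fix y assume "y \<in> set (map (\<lambda>i. if vs!i = p1 then vs!j else if vs!i = p2 then vs!k else vs!i)
            (filter (\<lambda>i. i \<noteq> j \<and> i \<noteq> k) [0..<length vs]))"
    then show "y \<in> set vs - {p1, p2}"
      using assms i1 i2 by (auto simp: nth_eq_iff_index_eq split: if_splits)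
  next
    fix y assume y: "y \<in> set vs - {p1, p2}"
    then obtain i where i: "i < length vs" "vs ! i = y" by (auto simp: in_set_conv_nth)
    show "y \<in> set (map (\<lambda>i. if vs!i = p1 then vs!j else if vs!i = p2 then vs!k else vs!i)
            (filter (\<lambda>i. i \<noteq> j \<and> i \<noteq> k) [0..<length vs]))"
    proof (cases "i = j")
      case True
      then have "i1 \<noteq> j" "i1 \<noteq> k" using i1 y i assms(9) by auto
      then show ?thesis using i y i1 True by (auto intro!: image_eqI[where x=i1])
    next
      case nj: False
      show ?thesis
      proof (cases "i = k")
        case True
        then have "i2 \<noteq> j" "i2 \<noteq> k" using i2 y i assms(8) by auto
        then show ?thesis using i y i2 True assms(7) by (auto intro!: image_eqI[where x=i2])
      next
        case False then show ?thesis using i y nj by (auto intro!: image_eqI[where x=i])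
      qed
    qed
  qed
qed

lemma anc_nth: "i < length vs \<Longrightarrow> anc_tuple E vs x ! i = npaths E (vs ! i) x"
  unfolding anc_tuple_def by simp

lemma part_i:
  assumes net: "phylo_network V E X" and two: "card X \<ge> 2" and ord: "is_ordering V X vs"
    and ab: "a \<in> X" "b \<in> X" "a \<noteq> b"
    and ch: "is_cherry E a b" and j: "j < length vs"
    and h1: "anc_tuple E vs a ! j = 1" and h2: "anc_tuple E vs b ! j = 1"
    and h3: "\<forall>x \<in> X - {a, b}. anc_tuple E vs x ! j = 0"
  shows "\<exists>vs'. is_ordering (fst (reduce_cherry V E a b)) (X - {b}) vs' \<and>
            anc_profile (snd (reduce_cherry V E a b)) (X - {b}) vs' =
              {(x, [anc_tuple E vs x ! i. i \<leftarrow> [0..<length vs], i \<noteq> j]) | x. x \<in> X - {b}}"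
proof -
  note nf = net_facts[OF net two]
  define p where "p = parent E b"
  have pa: "{u. (u, a) \<in> E} = {p}" using leaf_parent[OF net two ab(1)] ch
    unfolding p_def is_cherry_def by simp
  have pb: "{u. (u, b) \<in> E} = {p}" using leaf_parent[OF net two ab(2)] unfolding p_def by simp
  have ea: "(p, a) \<in> E" and eb: "(p, b) \<in> E" using pa pb by auto
  have pV: "p \<in> V" using ea nf(3) by auto
  have sa: "{c. (a, c) \<in> E} = {}" and sb: "{c. (b, c) \<in> E} = {}"
    using leaf_succs[OF net two] ab by auto
  have pX: "p \<notin> X" using leaf_succs[OF net two, of p] ea by auto
  have sp: "{c. (p, c) \<in> E} = {a, b}"
  proof -
    have "{a, b} \<subseteq> {c. (p, c) \<in> E}" using ea eb by auto
    moreover have "card {c. (p, c) \<in> E} \<le> 2" using outdeg_le2[OF net two pV] .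
    moreover have "card {a, b} = 2" using ab(3) by simp
    ultimately show ?thesis using card_subset_eq[OF finite_succs[OF nf(2)]]
      by (metis card_mono finite_succs[OF nf(2)] le_antisym)
  qed
  have odp: "outdeg E p = 2" using sp ab(3) unfolding outdeg_def by simp
  have colp: "\<And>x. x \<in> X \<Longrightarrow> npaths E p x = (if x = a then 1 else 0) + (if x = b then 1 else 0)"
  proof -
    fix x assume x: "x \<in> X"
    have "npaths E p x = (if p = x then 1 else 0) + (\<Sum>c\<in>{a, b}. npaths E c x)"
      using npaths_rec[OF nf(2,5), of p x] sp by simp
    also have "\<dots> = npaths E a x + npaths E b x" using pX x ab(3) by auto
    also have "\<dots> = (if x = a then 1 else 0) + (if x = b then 1 else 0)"
      using npaths_sink[OF nf(2,5) sa] npaths_sink[OF nf(2,5) sb] by auto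
    finally show "npaths E p x = (if x = a then 1 else 0) + (if x = b then 1 else 0)" .
  qed
  define w where "w = vs ! j"
  have colw: "\<And>x. x \<in> X - {b} \<Longrightarrow> npaths E w x = npaths E p x"
  proof -
    fix x assume x: "x \<in> X - {b}"
    show "npaths E w x = npaths E p x"
    proof (cases "x = a")
      case True then show ?thesis using h1 colp ab anc_nth[OF j] unfolding w_def by auto
    next
      case False then show ?thesis using h3 x colp anc_nth[OF j] unfolding w_def by auto
    qed
  qed
  have dvs: "distinct vs" and svs: "set vs = V - X" using ord unfolding is_ordering_def by auto
  have pvs: "p \<in> set vs" using svs pV pX by auto
  show ?thesis
  proof (cases "indeg E p = 0")
    case True
    have allp: "\<And>v. v \<in> V \<Longrightarrow> v \<in> {p, a, b}"
    proof -
      fix v assume v: "v \<in> V"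
      obtain r where r: "r \<in> V" "indeg E r = 0" "(r, v) \<in> E\<^sup>*" using reach_root[OF net two v] by blast
      have "r = p" using nf(6) r True pV by blast
      then have "(p, v) \<in> E\<^sup>*" using r by simp
      then show "v \<in> {p, a, b}"
      proof (cases rule: converse_rtranclE)
        case base then show ?thesis by simp
      next
        case (step c)
        then have "c = a \<or> c = b" using sp by auto
        then show ?thesis using step sink_rtrancl[OF sa] sink_rtrancl[OF sb] by auto
      qed
    qed
    have "V - X = {p}" using allp pV pX ab by auto
    then have "set vs = {p}" using svs by simp
    then have "length vs = 1" using distinct_card[OF dvs] by simp
    then have j0: "j = 0" using j by simp
    have red: "reduce_cherry V E a b = ({a}, {})"
      unfolding reduce_cherry_def Let_def p_def[symmetric] using True by simp
    have e: "\<And>x. [anc_tuple E vs x ! i. i \<leftarrow> [0..<length vs], i \<noteq> j] = []"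
      using \<open>length vs = 1\<close> j0 by simp
    show ?thesis
      apply (rule exI[where x="[]"])
      unfolding red e using ab by (auto simp: is_ordering_def anc_profile_def anc_tuple_def)
  next
    case False
    have "indeg E p = 1" using nf(10)[OF pV pX False] odp by auto
    then obtain q where pq: "{u. (u, p) \<in> E} = {q}" unfolding indeg_def by (rule card_1_singletonE)
    have qp: "(q, p) \<in> E" using pq by auto
    have qnp: "q \<noteq> p" using qp nf(5) by (auto simp: acyclic_def)
    define E1 where "E1 = E - {(p, b)}"
    have fin1: "finite E1" "acyclic E1" unfolding E1_def using nf(2) acyclic_subset[OF nf(5)] by auto
    have pr1: "{u. (u, p) \<in> E1} = {q}" using pq pX ab unfolding E1_def by auto
    have su1: "{c. (p, c) \<in> E1} = {a}" using sp ab unfolding E1_def by auto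
    have nqa: "(q, a) \<notin> E1" using pa qnp unfolding E1_def by auto
    define E' where "E' = {(q, a)} \<union> {e \<in> E1. fst e \<noteq> p \<and> snd e \<noteq> p}"
    have red: "reduce_cherry V E a b = (V - {b} - {p}, E')"
    proof -
      have "reduce_cherry V E a b = suppress p (V - {b}, E1)"
        unfolding reduce_cherry_def Let_def p_def[symmetric] E1_def using False by simp
      moreover have "snd (suppress p (V - {b}, E1)) = E'"
        unfolding E'_def by (rule suppress_eq[OF _ pr1 su1]) simp
      moreover have "fst (suppress p (V - {b}, E1)) = V - {b} - {p}" unfolding suppress_def by simp
      ultimately show ?thesis by (metis prod.collapse)
    qed
    have key: "\<And>v x. v \<noteq> p \<Longrightarrow> x \<in> X - {b} \<Longrightarrow> npaths E' v x = npaths E v x"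
    proof -
      fix v x assume v: "v \<noteq> p" and x: "x \<in> X - {b}"
      have xp: "x \<noteq> p" using x pX by auto
      have "npaths E' v x = npaths E1 v x"
        unfolding E'_def by (rule npaths_suppress[OF fin1 pr1 su1 nqa xp v])
      also have "\<dots> = npaths E v x" unfolding E1_def
        by (rule npaths_del[OF nf(2,5) eb]) (use npaths_sink[OF nf(2,5) sb] x in auto)
      finally show "npaths E' v x = npaths E v x" .
    qed
    define idx where "idx = filter (\<lambda>i. i \<noteq> j) [0..<length vs]"
    define vs' where "vs' = map (\<lambda>i. if vs!i = p then vs!j else vs!i) idx"
    have ro: "is_ordering (V - {b} - {p}) (X - {b}) vs'"
    proof -
      have "distinct vs'" "set vs' = set vs - {p}"
        using reindex1[OF dvs j pvs] unfolding vs'_def idx_def by auto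
      moreover have "V - {b} - {p} - (X - {b}) = set vs - {p}" using svs ab by auto
      ultimately show ?thesis unfolding is_ordering_def by simp
    qed
    have rows: "\<And>x. x \<in> X - {b} \<Longrightarrow> anc_tuple E' vs' x = [anc_tuple E vs x ! i. i \<leftarrow> [0..<length vs], i \<noteq> j]"
    proof -
      fix x assume x: "x \<in> X - {b}"
      have "anc_tuple E' vs' x = map (\<lambda>i. npaths E' (if vs!i = p then vs!j else vs!i) x) idx"
        unfolding anc_tuple_def vs'_def by simp
      also have "\<dots> = map (\<lambda>i. anc_tuple E vs x ! i) idx"
      proof (rule map_cong[OF refl])
        fix i assume "i \<in> set idx"
        then have i: "i < length vs" "i \<noteq> j" unfolding idx_def by auto
        show "npaths E' (if vs!i = p then vs!j else vs!i) x = anc_tuple E vs x ! i"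
        proof (cases "vs ! i = p")
          case True
          then have "vs ! j \<noteq> p" using i j dvs by (metis nth_eq_iff_index_eq)
          then show ?thesis using True key colw x anc_nth[OF i(1)] unfolding w_def by simp
        next
          case False then show ?thesis using key x anc_nth[OF i(1)] by simp
        qed
      qed
      also have "\<dots> = [anc_tuple E vs x ! i. i \<leftarrow> [0..<length vs], i \<noteq> j]"
        unfolding idx_def by (simp add: lc_filter)
      finally show "anc_tuple E' vs' x = [anc_tuple E vs x ! i. i \<leftarrow> [0..<length vs], i \<noteq> j]" .
    qed
    show ?thesis
      apply (rule exI[where x=vs'])
      unfolding red using ro rows by (auto simp: anc_profile_def)
  qed
qed

lemma part_ii:
  assumes net: "phylo_network V E X" and two: "card X \<ge> 2" and ord: "is_ordering V X vs"
    and ab: "a \<in> X" "b \<in> X" "a \<noteq> b"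
    and rc: "is_ret_cherry E a b" and j: "j < length vs" and k: "k < length vs"
    and h1: "anc_tuple E vs a ! j = 1" and h2: "anc_tuple E vs b ! j = 1"
    and h3: "\<forall>x \<in> X - {a, b}. anc_tuple E vs x ! j = 0"
    and h4: "anc_tuple E vs b ! k = 1" and h5: "\<forall>x \<in> X - {b}. anc_tuple E vs x ! k = 0"
  shows "\<exists>vs'. is_ordering (fst (cut_ret_cherry V E a b)) X vs' \<and>
            anc_profile (snd (cut_ret_cherry V E a b)) X vs' =
              {(x, [anc_tuple E vs x ! i. i \<leftarrow> [0..<length vs], i \<noteq> j \<and> i \<noteq> k]) | x. x \<in> X - {b}}
              \<union> {(b, [anc_tuple E vs b ! i - anc_tuple E vs a ! i.
                        i \<leftarrow> [0..<length vs], i \<noteq> j \<and> i \<noteq> k])}"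
proof -
  note nf = net_facts[OF net two]
  define pa where "pa = parent E a"
  define pb where "pb = parent E b"
  have pra: "{u. (u, a) \<in> E} = {pa}" using leaf_parent[OF net two ab(1)] unfolding pa_def by simp
  have prb: "{u. (u, b) \<in> E} = {pb}" using leaf_parent[OF net two ab(2)] unfolding pb_def by simp
  have ea: "(pa, a) \<in> E" and eb: "(pb, b) \<in> E" using pra prb by auto
  have epp: "(pa, pb) \<in> E" and ipb: "indeg E pb = 2"
    using rc unfolding is_ret_cherry_def pa_def pb_def by auto
  have sa: "{c. (a, c) \<in> E} = {}" and sb: "{c. (b, c) \<in> E} = {}"
    using leaf_succs[OF net two] ab by auto
  have paV: "pa \<in> V" and pbV: "pb \<in> V" using ea eb nf(3) by auto
  have paX: "pa \<notin> X" using leaf_succs[OF net two, of pa] ea by auto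
  have pbX: "pb \<notin> X" using leaf_succs[OF net two, of pb] eb by auto
  have spb: "{c. (pb, c) \<in> E} = {b}"
  proof -
    have "outdeg E pb = 1" using nf(10)[OF pbV pbX] ipb by auto
    then obtain z where "{c. (pb, c) \<in> E} = {z}" unfolding outdeg_def by (rule card_1_singletonE)
    then show ?thesis using eb by auto
  qed
  obtain u where prpb: "{y. (y, pb) \<in> E} = {pa, u}" and upa: "u \<noteq> pa"
  proof -
    obtain y1 y2 where y: "{y. (y, pb) \<in> E} = {y1, y2}" "y1 \<noteq> y2"
      using ipb unfolding indeg_def card_2_iff by blast
    have "pa \<in> {y1, y2}" using y epp by auto
    then show ?thesis using that y by auto
  qed
  have anpb: "a \<noteq> pb" using pbX ab by auto
  have papb: "pa \<noteq> pb" using spb ea ab(3) by auto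
  have spa: "{c. (pa, c) \<in> E} = {a, pb}"
  proof -
    have "{a, pb} \<subseteq> {c. (pa, c) \<in> E}" using ea epp by auto
    moreover have "card {c. (pa, c) \<in> E} \<le> 2" using outdeg_le2[OF net two paV] .
    moreover have "card {a, pb} = 2" using anpb by simp
    ultimately show ?thesis using card_subset_eq[OF finite_succs[OF nf(2)]]
      by (metis card_mono finite_succs[OF nf(2)] le_antisym)
  qed
  have odpa: "outdeg E pa = 2" using spa anpb unfolding outdeg_def by simp
  have upb: "u \<noteq> pb" using prpb nf(5) by (auto simp: acyclic_def)
  have up: "(u, pb) \<in> E" using prpb by auto
  have uV: "u \<in> V" using up nf(3) by auto
  have nroot: "indeg E pa \<noteq> 0"
  proof
    assume r0: "indeg E pa = 0"
    obtain r where r: "r \<in> V" "indeg E r = 0" "(r, u) \<in> E\<^sup>*" using reach_root[OF net two uV] by blast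
    have "r = pa" using nf(6) r r0 paV by blast
    then have "(pa, u) \<in> E\<^sup>*" using r by simp
    then show False
    proof (cases rule: converse_rtranclE)
      case base then show ?thesis using upa by simp
    next
      case (step c)
      then have "c = a \<or> c = pb" using spa by auto
      then show ?thesis
      proof
        assume "c = a"
        then have "u = a" using step sink_rtrancl[OF sa] by auto
        then show False using up sa by auto
      next
        assume "c = pb"
        then have "(pb, u) \<in> E\<^sup>*" using step by simp
        then show False
        proof (cases rule: converse_rtranclE)
          case base then show ?thesis using upb by simp
        next
          case (step d)
          then have "d = b" using spb by auto
          then have "u = b" using step sink_rtrancl[OF sb] by auto
          then show False using up sb by auto
        qed
      qed
    qed
  qed
  have "indeg E pa = 1" using nf(10)[OF paV paX nroot] odpa by auto
  then obtain q where prpa: "{y. (y, pa) \<in> E} = {q}" unfolding indeg_def by (rule card_1_singletonE)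
  have qpa: "(q, pa) \<in> E" using prpa by auto
  have qnpa: "q \<noteq> pa" using qpa nf(5) by (auto simp: acyclic_def)
  have qnpb: "q \<noteq> pb"
  proof
    assume "q = pb"
    then have "pa \<in> {c. (pb, c) \<in> E}" using qpa by simp
    then have "pa = b" using spb by simp
    then show False using paX ab by simp
  qed
  define E1 where "E1 = E - {(pa, pb)}"
  have fin1: "finite E1" "acyclic E1" unfolding E1_def using nf(2) acyclic_subset[OF nf(5)] by auto
  have pr1: "{y. (y, pa) \<in> E1} = {q}" using prpa papb unfolding E1_def by auto
  have su1: "{c. (pa, c) \<in> E1} = {a}" using spa anpb unfolding E1_def by auto
  have nqa: "(q, a) \<notin> E1" using pra qnpa unfolding E1_def by auto
  define E2 where "E2 = {(q, a)} \<union> {e \<in> E1. fst e \<noteq> pa \<and> snd e \<noteq> pa}"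
  have fin2: "finite E2" "acyclic E2" unfolding E2_def using suppress_fin_acyc[OF fin1 pr1 su1] by auto
  have prpb': "\<And>y. (y, pb) \<in> E \<longleftrightarrow> y = pa \<or> y = u" using prpb by (simp add: set_eq_iff)
  have spb': "\<And>z. (pb, z) \<in> E \<longleftrightarrow> z = b" using spb by (simp add: set_eq_iff)
  have prb': "\<And>y. (y, b) \<in> E \<longleftrightarrow> y = pb" using prb by (simp add: set_eq_iff)
  have e2: "\<And>y z. (y, z) \<in> E2 \<longleftrightarrow> (y = q \<and> z = a) \<or> ((y, z) \<in> E \<and> (y, z) \<noteq> (pa, pb) \<and> y \<noteq> pa \<and> z \<noteq> pa)"
    unfolding E2_def E1_def by auto
  have pr2: "{y. (y, pb) \<in> E2} = {u}"
  proof (intro set_eqI)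
    fix y show "y \<in> {y. (y, pb) \<in> E2} \<longleftrightarrow> y \<in> {u}"
      unfolding mem_Collect_eq e2 prpb' using upa anpb papb by auto
  qed
  have bpa: "b \<noteq> pa" using paX ab by auto
  have su2: "{c. (pb, c) \<in> E2} = {b}"
  proof (intro set_eqI)
    fix z show "z \<in> {c. (pb, c) \<in> E2} \<longleftrightarrow> z \<in> {b}"
      unfolding mem_Collect_eq e2 spb' using qnpb papb bpa by auto
  qed
  have nub: "(u, b) \<notin> E2" unfolding e2 prb' using upb ab by auto
  define E3 where "E3 = {(u, b)} \<union> {e \<in> E2. fst e \<noteq> pb \<and> snd e \<noteq> pb}"
  have fin3: "finite E3" "acyclic E3" unfolding E3_def using suppress_fin_acyc[OF fin2 pr2 su2] by auto
  have cut: "cut_ret_cherry V E a b = (V - {pa} - {pb}, E3)"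
  proof -
    have c: "cut_ret_cherry V E a b = suppress pb (suppress pa (V, E1))"
      unfolding cut_ret_cherry_def Let_def pa_def[symmetric] pb_def[symmetric] E1_def by simp
    have s2: "snd (suppress pa (V, E1)) = E2" unfolding E2_def by (rule suppress_eq[OF _ pr1 su1]) simp
    have "snd (suppress pb (suppress pa (V, E1))) = E3" unfolding E3_def by (rule suppress_eq[OF s2 pr2 su2])
    moreover have "fst (suppress pb (suppress pa (V, E1))) = V - {pa} - {pb}" unfolding suppress_def by simp
    ultimately show ?thesis using c by (metis prod.collapse)
  qed
  have k31: "\<And>v x. v \<notin> {pa, pb} \<Longrightarrow> x \<notin> {pa, pb} \<Longrightarrow> npaths E3 v x = npaths E1 v x"
  proof -
    fix v x assume v: "v \<notin> {pa, pb}" and x: "x \<notin> {pa, pb}"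
    have vx: "x \<noteq> pb" "v \<noteq> pb" "x \<noteq> pa" "v \<noteq> pa" using v x by auto
    have "npaths E3 v x = npaths E2 v x" unfolding E3_def
      by (rule npaths_suppress[OF fin2 pr2 su2 nub vx(1,2)])
    also have "\<dots> = npaths E1 v x" unfolding E2_def
      by (rule npaths_suppress[OF fin1 pr1 su1 nqa vx(3,4)])
    finally show "npaths E3 v x = npaths E1 v x" .
  qed
  have npbx: "\<And>x. x \<noteq> b \<Longrightarrow> x \<noteq> pb \<Longrightarrow> npaths E pb x = 0"
  proof -
    fix x assume xb: "x \<noteq> b" and xpb: "x \<noteq> pb"
    have "npaths E pb x = (if pb = x then 1 else 0) + (\<Sum>c\<in>{c. (pb, c) \<in> E}. npaths E c x)"
      by (rule npaths_rec[OF nf(2,5)])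
    also have "\<dots> = (if pb = x then 1 else 0) + npaths E b x" unfolding spb by simp
    also have "npaths E b x = 0" using npaths_sink[OF nf(2,5) sb, of x] xb by simp
    finally have "npaths E pb x = (if pb = x then 1 else 0)" by simp
    moreover have "pb \<noteq> x" using xpb by simp
    ultimately show "npaths E pb x = 0" by simp
  qed
  have k1x: "\<And>v x. x \<noteq> b \<Longrightarrow> x \<noteq> pb \<Longrightarrow> npaths E1 v x = npaths E v x"
  proof -
    fix v x assume "x \<noteq> b" "x \<noteq> pb"
    then have "npaths E pb x = 0" by (rule npbx)
    then show "npaths E1 v x = npaths E v x" unfolding E1_def by (rule npaths_del[OF nf(2,5) epp])
  qed
  have kb: "\<And>v. v \<noteq> a \<Longrightarrow> npaths E v b = npaths E1 v b + npaths E v a"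
  proof -
    define h where "h v = (if v = a then 0 else npaths E1 v b + npaths E v a)" for v
    have "h v = npaths E v b" for v
    proof (rule npaths_unique[OF nf(2,5)])
      fix v
      show "h v = (if v = b then 1 else 0) + (\<Sum>c\<in>{c. (v, c) \<in> E}. h c)"
      proof (cases "v = a")
        case True then show ?thesis using sa ab by (simp add: h_def)
      next
        case na: False
        show ?thesis
        proof (cases "v = pa")
          case True
          have a1: "npaths E1 a b = 0" using npaths_sink[OF fin1, of a b] sa ab unfolding E1_def by auto
          have a2: "npaths E1 pa b = npaths E1 a b"
            using npaths_rec[OF fin1, of pa b] su1 paX ab by auto
          have a3: "npaths E pa a = npaths E a a + npaths E pb a"
            using npaths_rec[OF nf(2,5), of pa a] spa paX ab anpb by auto
          have a4: "npaths E a a = 1" using npaths_sink[OF nf(2,5) sa] by simp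
          have s1b: "{c. (pb, c) \<in> E1} = {b}" using spb papb unfolding E1_def by auto
          have sb1: "{c. (b, c) \<in> E1} = {}" using sb unfolding E1_def by auto
          have a5: "npaths E1 pb b = 1"
            using npaths_rec[OF fin1, of pb b] s1b npaths_sink[OF fin1 sb1, of b] pbX ab by auto
          have pnab: "pa \<noteq> a" "pa \<noteq> b" using paX ab by auto
          have "(\<Sum>c\<in>{c. (v, c) \<in> E}. h c) = h a + h pb" using True spa anpb by simp
          then show ?thesis using True a1 a2 a3 a4 a5 pnab anpb by (simp add: h_def)
        next
          case npa: False
          have e1: "{c. (v, c) \<in> E1} = {c. (v, c) \<in> E}" using npa unfolding E1_def by auto
          have hc: "\<And>c. c \<in> {c. (v, c) \<in> E} \<Longrightarrow> h c = npaths E1 c b + npaths E c a"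
            using pra npa by (auto simp: h_def)
          have "h v = npaths E1 v b + npaths E v a" using na by (simp add: h_def)
          also have "\<dots> = ((if v = b then 1 else 0) + (\<Sum>c\<in>{c. (v, c) \<in> E}. npaths E1 c b))
                + ((if v = a then 1 else 0) + (\<Sum>c\<in>{c. (v, c) \<in> E}. npaths E c a))"
            using npaths_rec[OF fin1, of v b] npaths_rec[OF nf(2,5), of v a] e1 by simp
          also have "\<dots> = (if v = b then 1 else 0) + (\<Sum>c\<in>{c. (v, c) \<in> E}. h c)"
            using na hc by (simp add: sum.distrib)
          finally show ?thesis .
        qed
      qed
    qed
    then show "\<And>v. v \<noteq> a \<Longrightarrow> npaths E v b = npaths E1 v b + npaths E v a"
      by (metis h_def)
  qed
  have colpa: "\<And>x. x \<in> X \<Longrightarrow> npaths E pa x = (if x = a then 1 else 0) + (if x = b then 1 else 0)"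
  proof -
    fix x assume x: "x \<in> X"
    have "npaths E pa x = (if pa = x then 1 else 0) + (\<Sum>c\<in>{a, pb}. npaths E c x)"
      using npaths_rec[OF nf(2,5), of pa x] spa by simp
    also have "\<dots> = npaths E a x + npaths E pb x" using paX x anpb by auto
    also have "npaths E pb x = npaths E b x"
      using npaths_rec[OF nf(2,5), of pb x] spb pbX x by auto
    finally show "npaths E pa x = (if x = a then 1 else 0) + (if x = b then 1 else 0)"
      using npaths_sink[OF nf(2,5) sa] npaths_sink[OF nf(2,5) sb] by auto
  qed
  have colpb: "\<And>x. x \<in> X \<Longrightarrow> npaths E pb x = (if x = b then 1 else 0)"
  proof -
    fix x assume x: "x \<in> X"
    have "npaths E pb x = npaths E b x"
      using npaths_rec[OF nf(2,5), of pb x] spb pbX x by auto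
    then show "npaths E pb x = (if x = b then 1 else 0)" using npaths_sink[OF nf(2,5) sb] by auto
  qed
  define w1 where "w1 = vs ! j"
  define w2 where "w2 = vs ! k"
  have colw1: "\<And>x. x \<in> X \<Longrightarrow> npaths E w1 x = npaths E pa x"
  proof -
    fix x assume x: "x \<in> X"
    show "npaths E w1 x = npaths E pa x"
      using h1 h2 h3 x colpa anc_nth[OF j] ab unfolding w1_def by (cases "x = a"; cases "x = b") auto
  qed
  have colw2: "\<And>x. x \<in> X \<Longrightarrow> npaths E w2 x = npaths E pb x"
  proof -
    fix x assume x: "x \<in> X"
    show "npaths E w2 x = npaths E pb x"
      using h4 h5 x colpb anc_nth[OF k] ab unfolding w2_def by (cases "x = b") auto
  qed
  have w1pb: "w1 \<noteq> pb" using colw1[OF ab(1)] colpa[OF ab(1)] colpb[OF ab(1)] ab by auto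
  have w2pa: "w2 \<noteq> pa" using colw2[OF ab(1)] colpa[OF ab(1)] colpb[OF ab(1)] ab by auto
  have jk: "j \<noteq> k" using h1 h5 ab by auto
  have dvs: "distinct vs" and svs: "set vs = V - X" using ord unfolding is_ordering_def by auto
  have pavs: "pa \<in> set vs" and pbvs: "pb \<in> set vs" using svs paV paX pbV pbX by auto
  define idx where "idx = filter (\<lambda>i. i \<noteq> j \<and> i \<noteq> k) [0..<length vs]"
  define \<rho> where "\<rho> i = (if vs!i = pa then vs!j else if vs!i = pb then vs!k else vs!i)" for i
  define vs' where "vs' = map \<rho> idx"
  have ro: "is_ordering (V - {pa} - {pb}) X vs'"
  proof -
    have "distinct vs'" "set vs' = set vs - {pa, pb}"
      using reindex2[OF dvs j k jk pavs pbvs papb] w1pb w2pa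
      unfolding vs'_def idx_def \<rho>_def w1_def w2_def by auto
    moreover have "V - {pa} - {pb} - X = set vs - {pa, pb}" using svs by auto
    ultimately show ?thesis unfolding is_ordering_def by simp
  qed
  have rhoprop: "\<And>i. i \<in> set idx \<Longrightarrow> \<rho> i \<notin> {pa, pb} \<and> \<rho> i \<noteq> a \<and>
       (\<forall>x\<in>X. npaths E (\<rho> i) x = npaths E (vs ! i) x)"
  proof -
    fix i assume "i \<in> set idx"
    then have i: "i < length vs" "i \<noteq> j" "i \<noteq> k" unfolding idx_def by simp_all
    have w1V: "w1 \<in> V - X" using nth_mem[OF j] unfolding w1_def svs .
    have w2V: "w2 \<in> V - X" using nth_mem[OF k] unfolding w2_def svs .
    have viV: "vs ! i \<in> V - X" using nth_mem[OF i(1)] unfolding svs .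
    show "\<rho> i \<notin> {pa, pb} \<and> \<rho> i \<noteq> a \<and> (\<forall>x\<in>X. npaths E (\<rho> i) x = npaths E (vs ! i) x)"
    proof (cases "vs ! i = pa")
      case True
      then have "w1 \<noteq> pa" using i j dvs unfolding w1_def by (metis nth_eq_iff_index_eq)
      then show ?thesis using True colw1 w1pb w1V ab unfolding \<rho>_def w1_def by auto
    next
      case F1: False
      show ?thesis
      proof (cases "vs ! i = pb")
        case True
        then have "w2 \<noteq> pb" using i k dvs unfolding w2_def by (metis nth_eq_iff_index_eq)
        then show ?thesis using True F1 colw2 w2pa w2V ab unfolding \<rho>_def w2_def by auto
      next
        case False then show ?thesis using F1 viV ab unfolding \<rho>_def by auto
      qed
    qed
  qed
  have rows: "\<And>x. x \<in> X - {b} \<Longrightarrow> anc_tuple E3 vs' x =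
      [anc_tuple E vs x ! i. i \<leftarrow> [0..<length vs], i \<noteq> j \<and> i \<noteq> k]"
  proof -
    fix x assume x: "x \<in> X - {b}"
    have xp: "x \<notin> {pa, pb}" using x paX pbX by auto
    have "anc_tuple E3 vs' x = map (\<lambda>i. npaths E3 (\<rho> i) x) idx"
      unfolding anc_tuple_def vs'_def by simp
    also have "\<dots> = map (\<lambda>i. anc_tuple E vs x ! i) idx"
    proof (rule map_cong[OF refl])
      fix i assume iI: "i \<in> set idx"
      then have il: "i < length vs" unfolding idx_def by auto
      have r: "\<rho> i \<notin> {pa, pb}" "\<forall>x\<in>X. npaths E (\<rho> i) x = npaths E (vs ! i) x"
        using rhoprop[OF iI] by auto
      have "npaths E3 (\<rho> i) x = npaths E1 (\<rho> i) x" by (rule k31[OF r(1) xp])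
      also have "\<dots> = npaths E (\<rho> i) x" using k1x x xp by auto
      also have "\<dots> = npaths E (vs ! i) x" using r(2) x by auto
      finally show "npaths E3 (\<rho> i) x = anc_tuple E vs x ! i"
        using anc_nth[OF il] by simp
    qed
    also have "\<dots> = [anc_tuple E vs x ! i. i \<leftarrow> [0..<length vs], i \<noteq> j \<and> i \<noteq> k]"
      unfolding idx_def by (simp add: lc_filter)
    finally show "anc_tuple E3 vs' x = [anc_tuple E vs x ! i. i \<leftarrow> [0..<length vs], i \<noteq> j \<and> i \<noteq> k]" .
  qed
  have rowb: "anc_tuple E3 vs' b = [anc_tuple E vs b ! i - anc_tuple E vs a ! i.
                        i \<leftarrow> [0..<length vs], i \<noteq> j \<and> i \<noteq> k]"
  proof -
    have bp: "b \<notin> {pa, pb}" using ab paX pbX by auto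
    have "anc_tuple E3 vs' b = map (\<lambda>i. npaths E3 (\<rho> i) b) idx"
      unfolding anc_tuple_def vs'_def by simp
    also have "\<dots> = map (\<lambda>i. anc_tuple E vs b ! i - anc_tuple E vs a ! i) idx"
    proof (rule map_cong[OF refl])
      fix i assume iI: "i \<in> set idx"
      then have il: "i < length vs" unfolding idx_def by auto
      note rp = rhoprop[OF iI]
      have "npaths E3 (\<rho> i) b = npaths E1 (\<rho> i) b" using k31[OF _ bp] rp by auto
      also have "\<dots> = npaths E (\<rho> i) b - npaths E (\<rho> i) a" using kb[of "\<rho> i"] rp by auto
      also have "\<dots> = npaths E (vs ! i) b - npaths E (vs ! i) a" using rp ab by auto
      finally show "npaths E3 (\<rho> i) b = anc_tuple E vs b ! i - anc_tuple E vs a ! i"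
        using anc_nth[OF il] by simp
    qed
    also have "\<dots> = [anc_tuple E vs b ! i - anc_tuple E vs a ! i. i \<leftarrow> [0..<length vs], i \<noteq> j \<and> i \<noteq> k]"
      unfolding idx_def by (simp add: lc_filter)
    finally show ?thesis .
  qed
  show ?thesis
  proof (rule exI[where x=vs'], intro conjI)
    show "is_ordering (fst (cut_ret_cherry V E a b)) X vs'" unfolding cut using ro by simp
    show "anc_profile (snd (cut_ret_cherry V E a b)) X vs' =
      {(x, [anc_tuple E vs x ! i. i \<leftarrow> [0..<length vs], i \<noteq> j \<and> i \<noteq> k]) | x. x \<in> X - {b}}
      \<union> {(b, [anc_tuple E vs b ! i - anc_tuple E vs a ! i. i \<leftarrow> [0..<length vs], i \<noteq> j \<and> i \<noteq> k])}"
      unfolding cut snd_conv anc_profile_def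
    proof (intro set_eqI iffI)
      fix z assume "z \<in> {(x, anc_tuple E3 vs' x) |x. x \<in> X}"
      then obtain x where x: "x \<in> X" "z = (x, anc_tuple E3 vs' x)" by auto
      then show "z \<in> {(x, [anc_tuple E vs x ! i. i \<leftarrow> [0..<length vs], i \<noteq> j \<and> i \<noteq> k]) | x. x \<in> X - {b}}
      \<union> {(b, [anc_tuple E vs b ! i - anc_tuple E vs a ! i. i \<leftarrow> [0..<length vs], i \<noteq> j \<and> i \<noteq> k])}"
        using rows rowb by (cases "x = b") auto
    next
      fix z assume "z \<in> {(x, [anc_tuple E vs x ! i. i \<leftarrow> [0..<length vs], i \<noteq> j \<and> i \<noteq> k]) | x. x \<in> X - {b}}
      \<union> {(b, [anc_tuple E vs b ! i - anc_tuple E vs a ! i. i \<leftarrow> [0..<length vs], i \<noteq> j \<and> i \<noteq> k])}"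
      then show "z \<in> {(x, anc_tuple E3 vs' x) |x. x \<in> X}"
        using rows rowb ab by auto
    qed
  qed
qed


theorem lemma5p1:
  fixes V X :: "'v set" and E :: "('v \<times> 'v) set" and vs :: "'v list" and a b :: 'v
  assumes net: "phylo_network V E X"
    and two: "card X \<ge> 2"
    and ord: "is_ordering V X vs"
    and ab: "a \<in> X" "b \<in> X" "a \<noteq> b"
  shows
   "(is_cherry E a b \<longrightarrow>
      (\<forall>j < length vs.
         anc_tuple E vs a ! j = 1 \<and> anc_tuple E vs b ! j = 1 \<and>
         (\<forall>x \<in> X - {a, b}. anc_tuple E vs x ! j = 0) \<longrightarrow>
         (\<exists>vs'. is_ordering (fst (reduce_cherry V E a b)) (X - {b}) vs' \<and>
            anc_profile (snd (reduce_cherry V E a b)) (X - {b}) vs' =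
              {(x, [anc_tuple E vs x ! i. i \<leftarrow> [0..<length vs], i \<noteq> j]) | x. x \<in> X - {b}})))
    \<and>
    (is_ret_cherry E a b \<longrightarrow>
      (\<forall>j < length vs. \<forall>k < length vs.
         anc_tuple E vs a ! j = 1 \<and> anc_tuple E vs b ! j = 1 \<and>
         (\<forall>x \<in> X - {a, b}. anc_tuple E vs x ! j = 0) \<and>
         anc_tuple E vs b ! k = 1 \<and> (\<forall>x \<in> X - {b}. anc_tuple E vs x ! k = 0) \<longrightarrow>
         (\<exists>vs'. is_ordering (fst (cut_ret_cherry V E a b)) X vs' \<and>
            anc_profile (snd (cut_ret_cherry V E a b)) X vs' =
              {(x, [anc_tuple E vs x ! i. i \<leftarrow> [0..<length vs], i \<noteq> j \<and> i \<noteq> k]) | x. x \<in> X - {b}}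
              \<union> {(b, [anc_tuple E vs b ! i - anc_tuple E vs a ! i.
                        i \<leftarrow> [0..<length vs], i \<noteq> j \<and> i \<noteq> k])})))"
  using part_i[OF net two ord ab] part_ii[OF net two ord ab] by blast

end
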